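(* Under the Lyapunov condition, let $\widetilde{\sigma}^{(n)}_{\min}=\min_{1\le k\le n-1}|\widetilde{\lambda}^{(n)}_k|$ and $\widetilde{\sigma}^{(n)}_{\max}=\max_{1\le k\le n-1}|\widetilde{\lambda}^{(n)}_k|$. Then for every $x,y\in\mathbb{R}$, \[ \lim_{n\to\infty}\left|\mathbb{P}\Big(\sigma^{(n)}_{\min}\le x,\ \frac{\sigma^{(n)}_{\max}-\mathfrak{a}_n}{\mathfrak{b}_n}\le y\Big)-\mathbb{P}\Big(\widetilde{\sigma}^{(n)}_{\min}\le x,\ \frac{\widetilde{\sigma}^{(n)}_{\max}-\mathfrak{a}_n}{\mathfrak{b}_n}\le y\Big)\right|=0. \]
   Context: Lyapunov condition: $(\xi_j)_{j\in\mathbb{N}_0}$ is a sequence of i.i.d. non-degenerate real random variables on a probability space $(\Omega,\mathcal{F},\mathbb{P})$ with $\mathbb{E}[\xi_0]=0$, $\mathbb{E}[\xi_0^2]=1$, and there is $\delta>0$ with $\mathbb{E}[|\xi_0|^{2+\delta}]<\infty$. With $\omega_n=\exp(2\pi\mathsf{i}/n)$, $\lambda^{(n)}_k=\sum_{j=0}^{n-1}\xi_j\omega_n^{kj}$, $\sigma^{(n)}_{\min}=\min_{0\le k\le n-1}|\lambda^{(n)}_k|$, $\sigma^{(n)}_{\max}=\max_{0\le k\le n-1}|\lambda^{(n)}_k|$. With $s=2+\delta$, $\widetilde{\xi}^{(n)}_j=\xi_j\mathbf{1}\{|\xi_j|\le n^{1/s}\}-\mathbb{E}[\xi_j\mathbf{1}\{|\xi_j|\le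 n^{1/s}\}]$ and $\widetilde{\lambda}^{(n)}_k=\sum_{j=0}^{n-1}\widetilde{\xi}^{(n)}_j\omega_n^{kj}$ for $1\le k\le n-1$. $\mathfrak{a}_n=\sqrt{n\ln(n/2)}$, $\mathfrak{b}_n=\frac12\sqrt{n/\ln(n/2)}$ for $n\ge3$. *)

theory Defs
  imports "HOL-Probability.Probability"
begin

definition omega :: "nat \<Rightarrow> complex" where
  "omega n = exp (2 * of_real pi * \<i> / of_nat n)"

definition lam :: "(nat \<Rightarrow> 'a \<Rightarrow> real) \<Rightarrow> nat \<Rightarrow> nat \<Rightarrow> 'a \<Rightarrow> complex" where
  "lam X n k \<omega> = (\<Sum>j<n. complex_of_real (X j \<omega>) * omega n ^ (k * j))"

definition sig_min :: "(nat \<Rightarrow> 'a \<Rightarrow> real) \<Rightarrow> nat \<Rightarrow> 'a \<Rightarrow> real" where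
  "sig_min X n \<omega> = Min ((\<lambda>k. cmod (lam X n k \<omega>)) ` {0..<n})"

definition sig_max :: "(nat \<Rightarrow> 'a \<Rightarrow> real) \<Rightarrow> nat \<Rightarrow> 'a \<Rightarrow> real" where
  "sig_max X n \<omega> = Max ((\<lambda>k. cmod (lam X n k \<omega>)) ` {0..<n})"

definition trunc_var :: "'a measure \<Rightarrow> (nat \<Rightarrow> 'a \<Rightarrow> real) \<Rightarrow> real \<Rightarrow> nat \<Rightarrow> nat \<Rightarrow> 'a \<Rightarrow> real" where
  "trunc_var M X s n j \<omega> =
     (if \<bar>X j \<omega>\<bar> \<le> real n powr (1 / s) then X j \<omega> else 0)
     - (LINT t|M. (if \<bar>X j t\<bar> \<le> real n powr (1 / s) then X j t else 0))"

definition tsig_min :: "'a measure \<Rightarrow> (nat \<Rightarrow> 'a \<Rightarrow> real) \<Rightarrow> real \<Rightarrow> nat \<Rightarrow> 'a \<Rightarrow> real" where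
  "tsig_min M X s n \<omega> = Min ((\<lambda>k. cmod (lam (trunc_var M X s n) n k \<omega>)) ` {1..<n})"

definition tsig_max :: "'a measure \<Rightarrow> (nat \<Rightarrow> 'a \<Rightarrow> real) \<Rightarrow> real \<Rightarrow> nat \<Rightarrow> 'a \<Rightarrow> real" where
  "tsig_max M X s n \<omega> = Max ((\<lambda>k. cmod (lam (trunc_var M X s n) n k \<omega>)) ` {1..<n})"

definition a_seq :: "nat \<Rightarrow> real" where
  "a_seq n = sqrt (real n * ln (real n / 2))"

definition b_seq :: "nat \<Rightarrow> real" where
  "b_seq n = sqrt (real n / ln (real n / 2)) / 2"

end

theory Submission imports Defs "HOL-Real_Asymp.Real_Asymp" begin
lemma omega_pow: "omega n ^ k = exp(2 * of_real pi * \<i> * of_nat k / of_nat n)"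
  unfolding omega_def by (simp add: exp_of_nat_mult[symmetric] mult_ac)

lemma sum_omega_zero:
  assumes "1 \<le> k" "k < n"
  shows "(\<Sum>j<n. omega n ^ (k * j)) = 0"
proof -
  have ne: "omega n ^ k \<noteq> 1"
    using assms by (auto simp: omega_pow complex_root_unity_eq_1 dest: dvd_imp_le)
  have "(omega n ^ k) ^ n = omega n ^ (k * n)" by (simp add: power_mult)
  also have "\<dots> = 1"
    using assms by (subst omega_pow, subst complex_root_unity_eq_1) auto
  finally have "(omega n ^ k) ^ n = 1" .
  hence "(\<Sum>j<n. (omega n ^ k) ^ j) = 0"
    using ne by (simp add: sum_gp_strict)
  thus ?thesis by (simp add: power_mult)
qed

lemma distr_transfer:
  assumes meas: "\<And>j. \<xi> j \<in> borel_measurable M"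
    and ident: "\<And>j. distr M borel (\<xi> j) = distr M borel (\<xi> 0)"
    and g: "g \<in> borel_measurable (borel :: real measure)"
  shows "integral\<^sup>L M (\<lambda>\<omega>. g (\<xi> j \<omega>)) = integral\<^sup>L M (\<lambda>\<omega>. (g (\<xi> 0 \<omega>)::real))"
    and "integrable M (\<lambda>\<omega>. g (\<xi> j \<omega>)) = integrable M (\<lambda>\<omega>. (g (\<xi> 0 \<omega>)::real))"
proof -
  have "integral\<^sup>L M (\<lambda>\<omega>. g (\<xi> j \<omega>)) = integral\<^sup>L (distr M borel (\<xi> j)) g"
    using meas g by (simp add: integral_distr)
  also have "\<dots> = integral\<^sup>L (distr M borel (\<xi> 0)) g" by (simp add: ident[of j])
  also have "\<dots> = integral\<^sup>L M (\<lambda>\<omega>. g (\<xi> 0 \<omega>))"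
    using meas g by (simp add: integral_distr)
  finally show "integral\<^sup>L M (\<lambda>\<omega>. g (\<xi> j \<omega>)) = integral\<^sup>L M (\<lambda>\<omega>. (g (\<xi> 0 \<omega>)::real))" .
  have "integrable M (\<lambda>\<omega>. g (\<xi> j \<omega>)) = integrable (distr M borel (\<xi> j)) g"
    using meas g by (simp add: integrable_distr_eq)
  also have "\<dots> = integrable (distr M borel (\<xi> 0)) g" by (simp add: ident[of j])
  also have "\<dots> = integrable M (\<lambda>\<omega>. g (\<xi> 0 \<omega>))"
    using meas g by (simp add: integrable_distr_eq)
  finally show "integrable M (\<lambda>\<omega>. g (\<xi> j \<omega>)) = integrable M (\<lambda>\<omega>. (g (\<xi> 0 \<omega>)::real))" .
qed

lemma prob_transfer:
  assumes meas: "\<And>j. \<xi> j \<in> borel_measurable M"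
    and ident: "\<And>j. distr M borel (\<xi> j) = distr M borel (\<xi> 0)"
    and A: "A \<in> sets (borel :: real measure)"
  shows "measure M {\<omega>\<in>space M. \<xi> j \<omega> \<in> A} = measure M {\<omega>\<in>space M. \<xi> 0 \<omega> \<in> A}"
proof -
  have "measure M {\<omega>\<in>space M. \<xi> j \<omega> \<in> A} = measure (distr M borel (\<xi> j)) A"
    using meas A by (simp add: measure_distr vimage_def Int_def conj_commute)
  also have "\<dots> = measure (distr M borel (\<xi> 0)) A" by (simp add: ident[of j])
  also have "\<dots> = measure M {\<omega>\<in>space M. \<xi> 0 \<omega> \<in> A}"
    using meas A by (simp add: measure_distr vimage_def Int_def conj_commute)
  finally show ?thesis .
qed

lemma lam_meas[measurable]:
  assumes "\<And>j. X j \<in> borel_measurable M"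
  shows "lam X n k \<in> borel_measurable M"
  unfolding lam_def[abs_def] using assms by measurable

lemma sig_meas:
  assumes "\<And>j. X j \<in> borel_measurable M"
  shows "sig_min X n \<in> borel_measurable M" "sig_max X n \<in> borel_measurable M"
  unfolding sig_min_def[abs_def] sig_max_def[abs_def] using assms
  by (auto intro!: borel_measurable_Min borel_measurable_Max)

lemma trunc_meas:
  assumes "\<And>j. X j \<in> borel_measurable M"
  shows "trunc_var M X s n j \<in> borel_measurable M"
  unfolding trunc_var_def[abs_def] using assms by measurable

lemma tsig_meas:
  assumes "\<And>j. X j \<in> borel_measurable M"
  shows "tsig_min M X s n \<in> borel_measurable M" "tsig_max M X s n \<in> borel_measurable M"
proof -
  have [measurable]: "\<And>k. lam (trunc_var M X s n) n k \<in> borel_measurable M"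
    by (intro lam_meas trunc_meas assms)
  show "tsig_min M X s n \<in> borel_measurable M" "tsig_max M X s n \<in> borel_measurable M"
    unfolding tsig_min_def[abs_def] tsig_max_def[abs_def] by measurable
qed
lemma (in prob_space) clt_small:
  fixes Z :: "nat \<Rightarrow> 'a \<Rightarrow> real" and \<Phi> :: "real \<Rightarrow> real" and c :: "nat \<Rightarrow> real"
  assumes Zm: "\<And>n. Z n \<in> borel_measurable M"
    and conv: "\<And>t. (\<lambda>n. prob {\<omega>\<in>space M. Z n \<omega> \<le> t}) \<longlonglongrightarrow> \<Phi> t"
    and cont: "isCont \<Phi> 0" and c: "c \<longlonglongrightarrow> 0"
  shows "(\<lambda>n. prob {\<omega>\<in>space M. \<bar>Z n \<omega>\<bar> \<le> c n}) \<longlonglongrightarrow> 0"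
proof (rule tendsto_iff[THEN iffD2], intro allI impI)
  fix e :: real assume e: "e > 0"
  from cont e obtain d where d: "d > 0" and hd: "\<And>y. dist y 0 < d \<Longrightarrow> dist (\<Phi> y) (\<Phi> 0) < e/4"
    unfolding continuous_at_eps_delta by (metis divide_pos_pos zero_less_numeral)
  define \<epsilon> where "\<epsilon> = d/3"
  have ep: "\<epsilon> > 0" using d by (simp add: \<epsilon>_def)
  have h1: "\<bar>\<Phi> \<epsilon> - \<Phi> 0\<bar> < e/4" using hd[of \<epsilon>] d by (simp add: \<epsilon>_def dist_real_def)
  have h2: "\<bar>\<Phi> (-2*\<epsilon>) - \<Phi> 0\<bar> < e/4" using hd[of "-2*\<epsilon>"] d by (simp add: \<epsilon>_def dist_real_def)
  have "(\<lambda>n. prob {\<omega>\<in>space M. Z n \<omega> \<le> \<epsilon>} - prob {\<omega>\<in>space M. Z n \<omega> \<le> -2*\<epsilon>}) \<longlonglongrightarrow> \<Phi> \<epsilon> - \<Phi> (-2*\<epsilon>)"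
    by (intro tendsto_diff conv)
  moreover have "\<Phi> \<epsilon> - \<Phi> (-2*\<epsilon>) < e" using h1 h2 e by linarith
  ultimately have ev1: "eventually (\<lambda>n. prob {\<omega>\<in>space M. Z n \<omega> \<le> \<epsilon>} - prob {\<omega>\<in>space M. Z n \<omega> \<le> -2*\<epsilon>} < e) sequentially"
    by (rule order_tendstoD(2))
  have ev2: "eventually (\<lambda>n. c n < \<epsilon>) sequentially"
    using c ep by (rule order_tendstoD(2))
  show "eventually (\<lambda>n. dist (prob {\<omega>\<in>space M. \<bar>Z n \<omega>\<bar> \<le> c n}) 0 < e) sequentially"
    using ev1 ev2
  proof eventually_elim
    case (elim n)
    have [measurable]: "Z n \<in> borel_measurable M" by (rule Zm)
    have sub: "{\<omega>\<in>space M. \<bar>Z n \<omega>\<bar> \<le> c n} \<subseteq> {\<omega>\<in>space M. Z n \<omega> \<le> \<epsilon>} - {\<omega>\<in>space M. Z n \<omega> \<le> -2*\<epsilon>}"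
      using elim ep by auto
    have "prob {\<omega>\<in>space M. \<bar>Z n \<omega>\<bar> \<le> c n} \<le> prob ({\<omega>\<in>space M. Z n \<omega> \<le> \<epsilon>} - {\<omega>\<in>space M. Z n \<omega> \<le> -2*\<epsilon>})"
      by (rule finite_measure_mono[OF sub]) measurable
    also have "\<dots> = prob {\<omega>\<in>space M. Z n \<omega> \<le> \<epsilon>} - prob {\<omega>\<in>space M. Z n \<omega> \<le> -2*\<epsilon>}"
      using ep by (intro finite_measure_Diff) auto
    finally show ?case using elim by (simp add: dist_real_def)
  qed
qed

lemma (in prob_space) clt_large:
  fixes Z :: "nat \<Rightarrow> 'a \<Rightarrow> real" and \<Phi> :: "real \<Rightarrow> real" and c :: "nat \<Rightarrow> real"
  assumes Zm: "\<And>n. Z n \<in> borel_measurable M"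
    and conv: "\<And>t. (\<lambda>n. prob {\<omega>\<in>space M. Z n \<omega> \<le> t}) \<longlonglongrightarrow> \<Phi> t"
    and top: "(\<Phi> \<longlongrightarrow> 1) at_top" and bot: "(\<Phi> \<longlongrightarrow> 0) at_bot"
    and c: "filterlim c at_top sequentially"
  shows "(\<lambda>n. prob {\<omega>\<in>space M. \<bar>Z n \<omega>\<bar> > c n}) \<longlonglongrightarrow> 0"
proof (rule tendsto_iff[THEN iffD2], intro allI impI)
  fix e :: real assume e: "e > 0"
  have "eventually (\<lambda>t. \<Phi> t > 1 - e/4) at_top"
    using top e by (intro order_tendstoD(1)) auto
  then obtain N1 where N1: "\<And>t. t \<ge> N1 \<Longrightarrow> \<Phi> t > 1 - e/4"
    by (auto simp: eventually_at_top_linorder)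
  have "eventually (\<lambda>t. \<Phi> t < e/4) at_bot"
    using bot e by (intro order_tendstoD(2)) auto
  then obtain N2 where N2: "\<And>t. t \<le> N2 \<Longrightarrow> \<Phi> t < e/4"
    by (auto simp: eventually_at_bot_linorder)
  define T where "T = max N1 (- N2)"
  have hT1: "\<Phi> T > 1 - e/4" using N1 by (simp add: T_def)
  have hT2: "\<Phi> (-T) < e/4" using N2 by (simp add: T_def)
  have "(\<lambda>n. (1 - prob {\<omega>\<in>space M. Z n \<omega> \<le> T}) + prob {\<omega>\<in>space M. Z n \<omega> \<le> -T}) \<longlonglongrightarrow> (1 - \<Phi> T) + \<Phi> (-T)"
    by (intro tendsto_add tendsto_diff conv tendsto_const)
  moreover have "(1 - \<Phi> T) + \<Phi> (-T) < e" using hT1 hT2 e by linarith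
  ultimately have ev1: "eventually (\<lambda>n. (1 - prob {\<omega>\<in>space M. Z n \<omega> \<le> T}) + prob {\<omega>\<in>space M. Z n \<omega> \<le> -T} < e) sequentially"
    by (rule order_tendstoD(2))
  have ev2: "eventually (\<lambda>n. T \<le> c n) sequentially"
    using c by (simp add: filterlim_at_top)
  show "eventually (\<lambda>n. dist (prob {\<omega>\<in>space M. \<bar>Z n \<omega>\<bar> > c n}) 0 < e) sequentially"
    using ev1 ev2
  proof eventually_elim
    case (elim n)
    have [measurable]: "Z n \<in> borel_measurable M" by (rule Zm)
    have sub: "{\<omega>\<in>space M. \<bar>Z n \<omega>\<bar> > c n} \<subseteq> (space M - {\<omega>\<in>space M. Z n \<omega> \<le> T}) \<union> {\<omega>\<in>space M. Z n \<omega> \<le> -T}"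
      using elim by auto
    have "prob {\<omega>\<in>space M. \<bar>Z n \<omega>\<bar> > c n} \<le> prob ((space M - {\<omega>\<in>space M. Z n \<omega> \<le> T}) \<union> {\<omega>\<in>space M. Z n \<omega> \<le> -T})"
      by (rule finite_measure_mono[OF sub]) measurable
    also have "\<dots> \<le> prob (space M - {\<omega>\<in>space M. Z n \<omega> \<le> T}) + prob {\<omega>\<in>space M. Z n \<omega> \<le> -T}"
      by (intro measure_Un_le) auto
    also have "prob (space M - {\<omega>\<in>space M. Z n \<omega> \<le> T}) = 1 - prob {\<omega>\<in>space M. Z n \<omega> \<le> T}"
      by (intro prob_compl) measurable
    finally show ?case using elim by (simp add: dist_real_def)
  qed
qed
lemma (in prob_space) tail_vanish:
  fixes Y :: "'a \<Rightarrow> real"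
  assumes Ym[measurable]: "Y \<in> borel_measurable M" and Yi: "integrable M Y" and Y0: "\<And>\<omega>. 0 \<le> Y \<omega>"
  shows "(\<lambda>n. real n * prob {\<omega>\<in>space M. Y \<omega> > real n}) \<longlonglongrightarrow> 0"
proof -
  define s where "s i \<omega> = Y \<omega> * indicator {\<omega>\<in>space M. Y \<omega> > real i} \<omega>" for i \<omega>
  have sm[measurable]: "s i \<in> borel_measurable M" for i unfolding s_def by measurable
  have lim: "AE \<omega> in M. (\<lambda>i. s i \<omega>) \<longlonglongrightarrow> 0"
  proof (rule AE_I2)
    fix \<omega> assume "\<omega> \<in> space M"
    have "eventually (\<lambda>i. s i \<omega> = 0) sequentially"
    proof -
      obtain N :: nat where "Y \<omega> < real N" using reals_Archimedean2 by blast
      then show ?thesis unfolding eventually_sequentially s_def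
        by (intro exI[of _ N]) (auto simp: indicator_def)
    qed
    then show "(\<lambda>i. s i \<omega>) \<longlonglongrightarrow> 0" by (rule tendsto_eventually)
  qed
  have bound: "AE \<omega> in M. norm (s i \<omega>) \<le> Y \<omega>" for i
    using Y0 by (auto simp: s_def indicator_def)
  have I: "(\<lambda>i. integral\<^sup>L M (s i)) \<longlonglongrightarrow> integral\<^sup>L M (\<lambda>_. 0::real)"
    by (rule integral_dominated_convergence[OF _ sm Yi lim bound]) simp
  have si: "integrable M (s i)" for i
    by (rule integrable_dominated_convergence2[OF _ sm Yi lim bound]) simp
  show ?thesis
  proof (rule Lim_null_comparison[OF _ I[simplified]])
    show "eventually (\<lambda>n. norm (real n * prob {\<omega>\<in>space M. Y \<omega> > real n}) \<le> integral\<^sup>L M (s n)) sequentially"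
      unfolding eventually_sequentially
    proof (intro exI[of _ 1] allI impI)
      fix n :: nat assume n: "1 \<le> n"
      have "prob {\<omega>\<in>space M. Y \<omega> > real n} \<le> prob {\<omega>\<in>space M. s n \<omega> \<ge> real n}"
        by (rule finite_measure_mono) (auto simp: s_def indicator_def)
      also have "\<dots> \<le> integral\<^sup>L M (s n) / real n"
        using n Y0 by (intro integral_Markov_inequality_measure[OF si, where A="space M"]) (auto simp: s_def indicator_def)
      finally show "norm (real n * prob {\<omega>\<in>space M. Y \<omega> > real n}) \<le> integral\<^sup>L M (s n)"
        using n by (simp add: field_simps)
    qed
  qed
qed
lemma normal_singleton: "measure std_normal_distribution {t} = 0"
proof -
  have "emeasure (density lborel std_normal_density) {t} = (\<integral>\<^sup>+ x. ennreal (std_normal_density x) * indicator {t} x \<partial>lborel)"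
    by (rule emeasure_density) auto
  also have "\<dots> = (\<integral>\<^sup>+ x. 0 \<partial>(lborel::real measure))"
    using AE_lborel_singleton[of t] by (intro nn_integral_cong_AE) (auto elim!: eventually_mono simp: indicator_def)
  finally show ?thesis by (simp add: measure_def)
qed

lemma (in prob_space) diff_bound:
  assumes "A \<in> sets M" "B \<in> sets M" "C \<in> sets M"
    and "\<And>\<omega>. \<omega> \<in> space M \<Longrightarrow> \<omega> \<notin> C \<Longrightarrow> (\<omega> \<in> A \<longleftrightarrow> \<omega> \<in> B)"
  shows "\<bar>prob A - prob B\<bar> \<le> prob C"
proof -
  have sA: "A \<subseteq> space M" "B \<subseteq> space M" using assms(1,2) sets.sets_into_space by auto
  have "prob A \<le> prob (B \<union> C)" using assms sA by (intro finite_measure_mono) auto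
  also have "\<dots> \<le> prob B + prob C" using assms by (intro measure_Un_le) auto
  finally have 1: "prob A \<le> prob B + prob C" .
  have "prob B \<le> prob (A \<union> C)" using assms sA by (intro finite_measure_mono) auto
  also have "\<dots> \<le> prob A + prob C" using assms by (intro measure_Un_le) auto
  finally have 2: "prob B \<le> prob A + prob C" .
  show ?thesis using 1 2 by linarith
qed
theorem lemma2p3:
  fixes M :: "'a measure" and \<xi> :: "nat \<Rightarrow> 'a \<Rightarrow> real" and \<delta> x y :: real
  assumes P: "prob_space M"
    and meas: "\<And>j. \<xi> j \<in> borel_measurable M"
    and indep: "prob_space.indep_vars M (\<lambda>_. borel) \<xi> UNIV"
    and ident: "\<And>j. distr M borel (\<xi> j) = distr M borel (\<xi> 0)"
    and nondeg: "\<not> (\<exists>c. AE \<omega> in M. \<xi> 0 \<omega> = c)"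
    and int1: "integrable M (\<xi> 0)" and mean0: "(LINT \<omega>|M. \<xi> 0 \<omega>) = 0"
    and int2: "integrable M (\<lambda>\<omega>. (\<xi> 0 \<omega>)\<^sup>2)" and var1: "(LINT \<omega>|M. (\<xi> 0 \<omega>)\<^sup>2) = 1"
    and delta: "\<delta> > 0"
    and lyap: "integrable M (\<lambda>\<omega>. \<bar>\<xi> 0 \<omega>\<bar> powr (2 + \<delta>))"
  shows "(\<lambda>n. \<bar>measure M {\<omega> \<in> space M. sig_min \<xi> n \<omega> \<le> x \<and>
                    (sig_max \<xi> n \<omega> - a_seq n) / b_seq n \<le> y}
              - measure M {\<omega> \<in> space M. tsig_min M \<xi> (2 + \<delta>) n \<omega> \<le> x \<and>
                    (tsig_max M \<xi> (2 + \<delta>) n \<omega> - a_seq n) / b_seq n \<le> y}\<bar>)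
         \<longlonglongrightarrow> 0"
proof -
  interpret prob_space M by (rule P)
  define s where "s = 2 + \<delta>"
  have s0: "s > 0" using delta by (simp add: s_def)
  define t where "t n = real n powr (1 / s)" for n :: nat
  define c where "c n = (LINT \<tau>|M. (if \<bar>\<xi> 0 \<tau>\<bar> \<le> t n then \<xi> 0 \<tau> else 0))" for n
  define S where "S n \<omega> = (\<Sum>j<n. \<xi> j \<omega>)" for n \<omega>
  have [measurable]: "\<xi> j \<in> borel_measurable M" for j by (rule meas)
  have Sm[measurable]: "S n \<in> borel_measurable M" for n unfolding S_def by measurable
  note sigm[measurable] = sig_meas[OF meas] tsig_meas[OF meas]

  have trunc_eq: "trunc_var M \<xi> s n j \<omega> = (if \<bar>\<xi> j \<omega>\<bar> \<le> t n then \<xi> j \<omega> else 0) - c n" for n j \<omega>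
  proof -
    have g: "(\<lambda>v::real. if \<bar>v\<bar> \<le> t n then v else 0) \<in> borel_measurable borel" by measurable
    show ?thesis unfolding trunc_var_def c_def t_def[symmetric]
      using distr_transfer(1)[where \<xi>=\<xi> and M=M and j=j, OF meas ident g] by simp
  qed
  have lam_good: "lam (trunc_var M \<xi> s n) n k \<omega> = lam \<xi> n k \<omega>"
    if k: "1 \<le> k" "k < n" and good: "\<forall>j<n. \<bar>\<xi> j \<omega>\<bar> \<le> t n" for n k \<omega>
  proof -
    have "lam (trunc_var M \<xi> s n) n k \<omega> = (\<Sum>j<n. complex_of_real (\<xi> j \<omega>) * omega n ^ (k * j) - complex_of_real (c n) * omega n ^ (k * j))"
      unfolding lam_def using good by (intro sum.cong) (auto simp: trunc_eq algebra_simps)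
    also have "\<dots> = lam \<xi> n k \<omega> - complex_of_real (c n) * (\<Sum>j<n. omega n ^ (k * j))"
      by (simp add: lam_def sum_subtractf sum_distrib_left)
    also have "\<dots> = lam \<xi> n k \<omega>" using sum_omega_zero[OF k] by simp
    finally show ?thesis .
  qed
  have lam0: "cmod (lam \<xi> n 0 \<omega>) = \<bar>S n \<omega>\<bar>" for n \<omega>
    unfolding lam_def S_def by (simp flip: of_real_sum del: of_real_sum)
  have mean: "expectation (\<xi> n) = 0" for n
    using distr_transfer(1)[where \<xi>=\<xi> and M=M and j=n and g="\<lambda>v. v", OF meas ident] mean0 by simp
  have sqi: "integrable M (\<lambda>\<omega>. (\<xi> n \<omega>)\<^sup>2)" for n
    using distr_transfer(2)[where \<xi>=\<xi> and M=M and j=n and g="\<lambda>v. v\<^sup>2", OF meas ident] int2 by simp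
  have var: "variance (\<xi> n) = 1\<^sup>2" for n
    using distr_transfer(1)[where \<xi>=\<xi> and M=M and j=n and g="\<lambda>v. v\<^sup>2", OF meas ident] var1 mean[of n] by simp
  have clt: "weak_conv_m (\<lambda>n. distr M borel (\<lambda>\<omega>. (\<Sum>i<n. \<xi> i \<omega>) / sqrt (real n * 1\<^sup>2))) std_normal_distribution"
    by (rule central_limit_theorem_zero_mean[OF indep mean _ sqi var ident]) simp
  define Z where "Z n \<omega> = S n \<omega> / sqrt (real n)" for n \<omega>
  have Zm[measurable]: "Z n \<in> borel_measurable M" for n unfolding Z_def by measurable
  define \<Phi> where "\<Phi> = cdf std_normal_distribution"
  have \<Phi>cont: "isCont \<Phi> u" for u
    unfolding \<Phi>_def by (simp add: finite_borel_measure.isCont_cdf[OF real_distribution.finite_borel_measure_M[OF real_dist_normal_dist]] normal_singleton)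
  have conv: "(\<lambda>n. prob {\<omega>\<in>space M. Z n \<omega> \<le> u}) \<longlonglongrightarrow> \<Phi> u" for u
  proof -
    have "(\<lambda>n. cdf (distr M borel (Z n)) u) \<longlonglongrightarrow> \<Phi> u"
      using clt \<Phi>cont[of u] unfolding weak_conv_m_def weak_conv_def \<Phi>_def Z_def S_def by simp
    moreover have "cdf (distr M borel (Z n)) u = prob {\<omega>\<in>space M. Z n \<omega> \<le> u}" for n
      by (simp add: cdf_def measure_distr vimage_def Int_def conj_commute)
    ultimately show ?thesis by simp
  qed
  have \<Phi>top: "(\<Phi> \<longlongrightarrow> 1) at_top"
    unfolding \<Phi>_def by (rule real_distribution.cdf_lim_at_top_prob[OF real_dist_normal_dist])
  have \<Phi>bot: "(\<Phi> \<longlongrightarrow> 0) at_bot"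
    unfolding \<Phi>_def by (rule finite_borel_measure.cdf_lim_at_bot[OF real_distribution.finite_borel_measure_M[OF real_dist_normal_dist]])
  have P1: "(\<lambda>n. prob {\<omega>\<in>space M. \<bar>S n \<omega>\<bar> \<le> x}) \<longlonglongrightarrow> 0"
  proof -
    have "(\<lambda>n. x / sqrt (real n)) \<longlonglongrightarrow> 0" by real_asymp
    from clt_small[OF Zm conv \<Phi>cont this]
    have *: "(\<lambda>n. prob {\<omega>\<in>space M. \<bar>Z n \<omega>\<bar> \<le> x / sqrt (real n)}) \<longlonglongrightarrow> 0" .
    have "eventually (\<lambda>n. prob {\<omega>\<in>space M. \<bar>Z n \<omega>\<bar> \<le> x / sqrt (real n)} = prob {\<omega>\<in>space M. \<bar>S n \<omega>\<bar> \<le> x}) sequentially"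
      unfolding eventually_sequentially
    proof (intro exI[of _ 1] allI impI)
      fix n :: nat assume "1 \<le> n"
      then have "sqrt (real n) > 0" by simp
      then have "\<bar>Z n \<omega>\<bar> \<le> x / sqrt (real n) \<longleftrightarrow> \<bar>S n \<omega>\<bar> \<le> x" for \<omega>
        unfolding Z_def by (simp add: abs_div divide_le_cancel)
      then show "prob {\<omega>\<in>space M. \<bar>Z n \<omega>\<bar> \<le> x / sqrt (real n)} = prob {\<omega>\<in>space M. \<bar>S n \<omega>\<bar> \<le> x}" by simp
    qed
    from Lim_transform_eventually[OF * this] show ?thesis .
  qed
  have P2: "(\<lambda>n. prob {\<omega>\<in>space M. \<bar>S n \<omega>\<bar> > a_seq n + b_seq n * y}) \<longlonglongrightarrow> 0"
  proof -
    have "filterlim (\<lambda>n. (a_seq n + b_seq n * y) / sqrt (real n)) at_top sequentially"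
      unfolding a_seq_def b_seq_def by real_asymp
    from clt_large[OF Zm conv \<Phi>top \<Phi>bot this]
    have *: "(\<lambda>n. prob {\<omega>\<in>space M. \<bar>Z n \<omega>\<bar> > (a_seq n + b_seq n * y) / sqrt (real n)}) \<longlonglongrightarrow> 0" .
    have "eventually (\<lambda>n. prob {\<omega>\<in>space M. \<bar>Z n \<omega>\<bar> > (a_seq n + b_seq n * y) / sqrt (real n)} = prob {\<omega>\<in>space M. \<bar>S n \<omega>\<bar> > a_seq n + b_seq n * y}) sequentially"
      unfolding eventually_sequentially
    proof (intro exI[of _ 1] allI impI)
      fix n :: nat assume "1 \<le> n"
      then have "sqrt (real n) > 0" by simp
      then have "\<bar>Z n \<omega>\<bar> > (a_seq n + b_seq n * y) / sqrt (real n) \<longleftrightarrow> \<bar>S n \<omega>\<bar> > a_seq n + b_seq n * y" for \<omega>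
        unfolding Z_def by (simp add: abs_div divide_less_cancel)
      then show "prob {\<omega>\<in>space M. \<bar>Z n \<omega>\<bar> > (a_seq n + b_seq n * y) / sqrt (real n)} = prob {\<omega>\<in>space M. \<bar>S n \<omega>\<bar> > a_seq n + b_seq n * y}" by simp
    qed
    from Lim_transform_eventually[OF * this] show ?thesis .
  qed
  define Y where "Y \<omega> = \<bar>\<xi> 0 \<omega>\<bar> powr s" for \<omega>
  have Ym[measurable]: "Y \<in> borel_measurable M" unfolding Y_def by measurable
  have Yi: "integrable M Y" using lyap unfolding Y_def s_def .
  have tailY: "(\<lambda>n. real n * prob {\<omega>\<in>space M. Y \<omega> > real n}) \<longlonglongrightarrow> 0"
    by (rule tail_vanish[OF Ym Yi]) (simp add: Y_def)
  define Bad where "Bad n = {\<omega>\<in>space M. \<exists>j<n. t n < \<bar>\<xi> j \<omega>\<bar>}" for n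
  have Badm[measurable]: "Bad n \<in> sets M" for n
  proof -
    have "Bad n = (\<Union>j\<in>{..<n}. {\<omega>\<in>space M. t n < \<bar>\<xi> j \<omega>\<bar>})" unfolding Bad_def by auto
    also have "\<dots> \<in> sets M" by measurable
    finally show ?thesis .
  qed
  have P3: "(\<lambda>n. prob (Bad n)) \<longlonglongrightarrow> 0"
  proof (rule Lim_null_comparison[OF _ tailY])
    show "eventually (\<lambda>n. norm (prob (Bad n)) \<le> real n * prob {\<omega>\<in>space M. Y \<omega> > real n}) sequentially"
      unfolding eventually_sequentially
    proof (intro exI[of _ 1] allI impI)
      fix n :: nat assume n: "1 \<le> n"
      have "Bad n = (\<Union>j\<in>{..<n}. {\<omega>\<in>space M. t n < \<bar>\<xi> j \<omega>\<bar>})" unfolding Bad_def by auto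
      hence "prob (Bad n) \<le> (\<Sum>j<n. prob {\<omega>\<in>space M. t n < \<bar>\<xi> j \<omega>\<bar>})"
        by (simp only:) (rule finite_measure_subadditive_finite, auto)
      also have "\<dots> = (\<Sum>j<n. prob {\<omega>\<in>space M. t n < \<bar>\<xi> 0 \<omega>\<bar>})"
      proof (rule sum.cong[OF refl])
        fix j
        have "{v::real. t n < \<bar>v\<bar>} \<in> sets borel" by measurable
        from prob_transfer[where \<xi>=\<xi> and M=M and j=j, OF meas ident this]
        show "prob {\<omega>\<in>space M. t n < \<bar>\<xi> j \<omega>\<bar>} = prob {\<omega>\<in>space M. t n < \<bar>\<xi> 0 \<omega>\<bar>}" by simp
      qed
      also have "\<dots> = real n * prob {\<omega>\<in>space M. t n < \<bar>\<xi> 0 \<omega>\<bar>}" by simp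
      also have "\<dots> \<le> real n * prob {\<omega>\<in>space M. Y \<omega> > real n}"
      proof (intro mult_left_mono finite_measure_mono)
        show "{\<omega>\<in>space M. t n < \<bar>\<xi> 0 \<omega>\<bar>} \<subseteq> {\<omega>\<in>space M. Y \<omega> > real n}"
        proof safe
          fix \<omega> assume "\<omega> \<in> space M" "t n < \<bar>\<xi> 0 \<omega>\<bar>"
          have tn: "0 \<le> t n" by (simp add: t_def)
          have "t n powr s < \<bar>\<xi> 0 \<omega>\<bar> powr s"
            using powr_less_mono2[OF s0 tn \<open>t n < \<bar>\<xi> 0 \<omega>\<bar>\<close>] .
          moreover have "t n powr s = real n" using n s0 by (simp add: t_def powr_powr)
          ultimately show "real n < Y \<omega>" by (simp add: Y_def)
        qed
      qed auto
      finally show "norm (prob (Bad n)) \<le> real n * prob {\<omega>\<in>space M. Y \<omega> > real n}" by simp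
    qed
  qed
  define E where "E n = {\<omega>\<in>space M. \<bar>S n \<omega>\<bar> \<le> x} \<union> {\<omega>\<in>space M. \<bar>S n \<omega>\<bar> > a_seq n + b_seq n * y} \<union> Bad n" for n
  have Em: "E n \<in> sets M" for n unfolding E_def by measurable
  have PE: "prob (E n) \<le> prob {\<omega>\<in>space M. \<bar>S n \<omega>\<bar> \<le> x} + prob {\<omega>\<in>space M. \<bar>S n \<omega>\<bar> > a_seq n + b_seq n * y} + prob (Bad n)" for n
  proof -
    have "prob (E n) \<le> prob ({\<omega>\<in>space M. \<bar>S n \<omega>\<bar> \<le> x} \<union> {\<omega>\<in>space M. \<bar>S n \<omega>\<bar> > a_seq n + b_seq n * y}) + prob (Bad n)"
      unfolding E_def by (intro measure_Un_le) measurable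
    also have "prob ({\<omega>\<in>space M. \<bar>S n \<omega>\<bar> \<le> x} \<union> {\<omega>\<in>space M. \<bar>S n \<omega>\<bar> > a_seq n + b_seq n * y}) \<le> prob {\<omega>\<in>space M. \<bar>S n \<omega>\<bar> \<le> x} + prob {\<omega>\<in>space M. \<bar>S n \<omega>\<bar> > a_seq n + b_seq n * y}"
      by (intro measure_Un_le) measurable
    finally show ?thesis by simp
  qed
  have key: "(sig_min \<xi> n \<omega> \<le> x \<and> (sig_max \<xi> n \<omega> - a_seq n) / b_seq n \<le> y) \<longleftrightarrow>
             (tsig_min M \<xi> s n \<omega> \<le> x \<and> (tsig_max M \<xi> s n \<omega> - a_seq n) / b_seq n \<le> y)"
    if n: "3 \<le> n" and \<omega>E: "\<omega> \<in> space M" "\<omega> \<notin> E n" for n \<omega>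
  proof -
    define f where "f k = cmod (lam \<xi> n k \<omega>)" for k
    have L1: "\<not> f 0 \<le> x" and L2: "f 0 \<le> a_seq n + b_seq n * y"
      using \<omega>E by (auto simp: E_def f_def lam0 not_less)
    have good: "\<forall>j<n. \<bar>\<xi> j \<omega>\<bar> \<le> t n"
      using \<omega>E unfolding E_def Bad_def by (simp add: not_less) (meson not_less)
    have img: "{0..<n} = insert 0 {1..<n}" using n by auto
    have ne: "{1..<n} \<noteq> {}" using n by auto
    have smin: "sig_min \<xi> n \<omega> = min (f 0) (Min (f ` {1..<n}))"
      unfolding sig_min_def f_def[symmetric] img image_insert using ne by (simp add: Min_insert)
    have smax: "sig_max \<xi> n \<omega> = max (f 0) (Max (f ` {1..<n}))"
      unfolding sig_max_def f_def[symmetric] img image_insert using ne by (simp add: Max_insert)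
    have timg: "(\<lambda>k. cmod (lam (trunc_var M \<xi> s n) n k \<omega>)) ` {1..<n} = f ` {1..<n}"
      using good by (intro image_cong) (auto simp: f_def lam_good)
    have tmin: "tsig_min M \<xi> s n \<omega> = Min (f ` {1..<n})" unfolding tsig_min_def timg ..
    have tmax: "tsig_max M \<xi> s n \<omega> = Max (f ` {1..<n})" unfolding tsig_max_def timg ..
    have "1 < real n / 2" using n by simp
    hence "ln (real n / 2) > 0" by simp
    hence b0: "b_seq n > 0" unfolding b_seq_def using n by simp
    show ?thesis unfolding smin smax tmin tmax using L1 L2 b0
      by (auto simp: pos_divide_le_eq min_def max_def algebra_simps)
  qed
  have bound: "eventually (\<lambda>n. norm \<bar>measure M {\<omega> \<in> space M. sig_min \<xi> n \<omega> \<le> x \<and>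
                    (sig_max \<xi> n \<omega> - a_seq n) / b_seq n \<le> y}
              - measure M {\<omega> \<in> space M. tsig_min M \<xi> s n \<omega> \<le> x \<and>
                    (tsig_max M \<xi> s n \<omega> - a_seq n) / b_seq n \<le> y}\<bar>
     \<le> prob {\<omega>\<in>space M. \<bar>S n \<omega>\<bar> \<le> x} + prob {\<omega>\<in>space M. \<bar>S n \<omega>\<bar> > a_seq n + b_seq n * y} + prob (Bad n)) sequentially"
    unfolding eventually_sequentially
  proof (intro exI[of _ 3] allI impI)
    fix n :: nat assume n: "3 \<le> n"
    have "\<bar>measure M {\<omega> \<in> space M. sig_min \<xi> n \<omega> \<le> x \<and> (sig_max \<xi> n \<omega> - a_seq n) / b_seq n \<le> y}
              - measure M {\<omega> \<in> space M. tsig_min M \<xi> s n \<omega> \<le> x \<and> (tsig_max M \<xi> s n \<omega> - a_seq n) / b_seq n \<le> y}\<bar>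
          \<le> prob (E n)"
      apply (rule diff_bound[OF _ _ Em])
        apply measurable
       apply measurable
      using key[OF n] by auto
    then show "norm \<bar>measure M {\<omega> \<in> space M. sig_min \<xi> n \<omega> \<le> x \<and> (sig_max \<xi> n \<omega> - a_seq n) / b_seq n \<le> y}
              - measure M {\<omega> \<in> space M. tsig_min M \<xi> s n \<omega> \<le> x \<and> (tsig_max M \<xi> s n \<omega> - a_seq n) / b_seq n \<le> y}\<bar>
          \<le> prob {\<omega>\<in>space M. \<bar>S n \<omega>\<bar> \<le> x} + prob {\<omega>\<in>space M. \<bar>S n \<omega>\<bar> > a_seq n + b_seq n * y} + prob (Bad n)"
      using PE[of n] by simp
  qed
  have lim0: "(\<lambda>n. prob {\<omega>\<in>space M. \<bar>S n \<omega>\<bar> \<le> x} + prob {\<omega>\<in>space M. \<bar>S n \<omega>\<bar> > a_seq n + b_seq n * y} + prob (Bad n)) \<longlonglongrightarrow> 0"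
    using tendsto_add[OF tendsto_add[OF P1 P2] P3] by simp
  show ?thesis unfolding s_def[symmetric]
    by (rule Lim_null_comparison[OF bound lim0])
qed

end
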